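(* Let $E$ be a reflexive, strictly convex Banach space and $C$ a closed convex subset of $E$. Suppose that $\mathcal{S}=\{T_s:s\in S\}$ is a representation of a semigroup $S$ on $C$ by nonexpansive self-mappings. Then the following are equivalent: (1) there is a closed, $S$-invariant convex subset $C_0$ of $C$ such that $A_{C_0}(\mathcal{S})\neq\emptyset$; (2) $S$ has a common fixed point in $C$.
   Context: A representation of a semigroup $S$ on $C$ is a family of maps $T_s:C\to C$ with $T_{st}=T_s\circ T_t$ for $s,t\in S$; it is nonexpansive if $\|T_sx-T_sy\|\le\|x-y\|$ for all $s\in S$, $x,y\in C$. A subset $C_0\subseteq C$ is $S$-invariant if $T_s(C_0)\subseteq C_0$ for all $s$. For a subset $D\subseteq C$, $A_D(\mathcal{S})$ is the set of all $a\in E$ with $\|a-T_sx\|\le\|a-x\|$ for all $x\in D$, $s\in S$ (attractive points for $D$). A common fixed point is $x\in C$ with $T_sx=x$ for all $s\in S$. *)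

theory Defs
  imports "HOL-Analysis.Analysis"
begin

definition reflexive_space :: "'a::real_normed_vector itself \<Rightarrow> bool" where
  "reflexive_space _ \<longleftrightarrow>
     (\<forall>\<phi> :: ('a \<Rightarrow>\<^sub>L real) \<Rightarrow>\<^sub>L real. \<exists>x::'a. \<forall>f. blinfun_apply \<phi> f = blinfun_apply f x)"

text \<open>Strict convexity: the open segment between distinct unit vectors lies in the open unit ball
  (here: the midpoint has norm < 1, the standard definition).\<close>
definition strictly_convex_space :: "'a::real_normed_vector itself \<Rightarrow> bool" where
  "strictly_convex_space _ \<longleftrightarrow>
     (\<forall>x y :: 'a. norm x = 1 \<and> norm y = 1 \<and> x \<noteq> y \<longrightarrow> norm ((1/2) *\<^sub>R (x + y)) < 1)"

definition semigroup_representation ::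
  "('s::semigroup_mult \<Rightarrow> 'a \<Rightarrow> 'a) \<Rightarrow> 'a set \<Rightarrow> bool" where
  "semigroup_representation T C \<longleftrightarrow>
     (\<forall>s. T s ` C \<subseteq> C) \<and> (\<forall>s t. \<forall>x\<in>C. T (s * t) x = T s (T t x))"

definition nonexpansive_rep :: "('s \<Rightarrow> 'a::real_normed_vector \<Rightarrow> 'a) \<Rightarrow> 'a set \<Rightarrow> bool" where
  "nonexpansive_rep T C \<longleftrightarrow> (\<forall>s. \<forall>x\<in>C. \<forall>y\<in>C. norm (T s x - T s y) \<le> norm (x - y))"

definition S_invariant :: "('s \<Rightarrow> 'a \<Rightarrow> 'a) \<Rightarrow> 'a set \<Rightarrow> bool" where
  "S_invariant T C0 \<longleftrightarrow> (\<forall>s. T s ` C0 \<subseteq> C0)"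

definition attractive_points :: "('s \<Rightarrow> 'a::real_normed_vector \<Rightarrow> 'a) \<Rightarrow> 'a set \<Rightarrow> 'a set" where
  "attractive_points T D = {a. \<forall>x\<in>D. \<forall>s. norm (a - T s x) \<le> norm (a - x)}"

end

theory Submission
  imports Defs
begin

definition goodg :: "('a::real_vector \<Rightarrow> real) \<Rightarrow> ('a \<times> real) set \<Rightarrow> bool" where
  "goodg Q G \<longleftrightarrow> (0,0) \<in> G \<and>
     (\<forall>v r w s a b. (v,r)\<in>G \<longrightarrow> (w,s)\<in>G \<longrightarrow> (a *\<^sub>R v + b *\<^sub>R w, a * r + b * s) \<in> G) \<and>
     (\<forall>v r. (v,r)\<in>G \<longrightarrow> r \<le> Q v)"

lemma goodg_comb: "goodg Q G \<Longrightarrow> (v,r)\<in>G \<Longrightarrow> (w,s)\<in>G \<Longrightarrow> (a *\<^sub>R v + b *\<^sub>R w, a * r + b * s) \<in> G"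
  unfolding goodg_def by blast
lemma goodg_le: "goodg Q G \<Longrightarrow> (v,r)\<in>G \<Longrightarrow> r \<le> Q v"
  unfolding goodg_def by blast
lemma goodg_0: "goodg Q G \<Longrightarrow> (0,0)\<in>G"
  unfolding goodg_def by blast

lemma goodg_fun:
  assumes "goodg Q G" "Q 0 = 0" "(v,r)\<in>G" "(v,s)\<in>G" shows "r = s"
proof -
  have "(1 *\<^sub>R v + (-1) *\<^sub>R v, 1 * r + (-1) * s) \<in> G" "(1 *\<^sub>R v + (-1) *\<^sub>R v, 1 * s + (-1) * r) \<in> G"
    using goodg_comb[OF assms(1)] assms(3,4) by blast+
  then have "r - s \<le> Q 0" "s - r \<le> Q 0" using goodg_le[OF assms(1)] by auto
  then show ?thesis using assms(2) by simp
qed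

lemma goodg_extend:
  fixes Q :: "'a::real_vector \<Rightarrow> real"
  assumes cvx: "\<And>u v a. 0 \<le> a \<Longrightarrow> a \<le> 1 \<Longrightarrow> Q (a *\<^sub>R u + (1-a) *\<^sub>R v) \<le> a * Q u + (1-a) * Q v"
    and Q0: "Q 0 = 0" and G: "goodg Q G" and y: "\<forall>r. (y,r) \<notin> G"
  shows "\<exists>G'. goodg Q G' \<and> G \<subseteq> G' \<and> G' \<noteq> G"
proof -
  define L where "L = {(r' - Q (m' - s *\<^sub>R y)) / s | m' r' s. (m',r')\<in>G \<and> s > 0}"
  define U where "U = {(Q (m + t *\<^sub>R y) - r) / t | m r t. (m,r)\<in>G \<and> t > 0}"
  have key: "l \<le> u" if lL: "l \<in> L" and uU: "u \<in> U" for l u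
  proof -
    obtain r' m' s where 1: "l = (r' - Q (m' - s *\<^sub>R y)) / s" "(m',r')\<in>G" "s > 0"
      using lL unfolding L_def by blast
    obtain r m t where 2: "u = (Q (m + t *\<^sub>R y) - r) / t" "(m,r)\<in>G" "t > 0"
      using uU unfolding U_def by blast
    define a where "a = s / (s+t)"
    have a: "0 \<le> a" "a \<le> 1" "1 - a = t/(s+t)" using 1 2 by (auto simp: a_def field_simps)
    have "(a *\<^sub>R m + (1-a) *\<^sub>R m', a * r + (1-a) * r') \<in> G" using goodg_comb[OF G] 1 2 by blast
    then have "a * r + (1-a) * r' \<le> Q (a *\<^sub>R m + (1-a) *\<^sub>R m')" using goodg_le[OF G] by blast
    also have "a *\<^sub>R m + (1-a) *\<^sub>R m' = a *\<^sub>R (m + t *\<^sub>R y) + (1-a) *\<^sub>R (m' - s *\<^sub>R y)"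
    proof -
      have "a * t = (1-a) * s" using a 1 2 by (simp add: a_def field_simps)
      then have "a *\<^sub>R (t *\<^sub>R y) - (1-a) *\<^sub>R (s *\<^sub>R y) = 0" by (simp add: scaleR_scaleR)
      then show ?thesis by (simp add: algebra_simps)
    qed
    also have "Q \<dots> \<le> a * Q (m + t *\<^sub>R y) + (1-a) * Q (m' - s *\<^sub>R y)" using cvx a by blast
    finally have fin: "a * r + (1-a) * r' \<le> a * Q (m + t *\<^sub>R y) + (1-a) * Q (m' - s *\<^sub>R y)" .
    have sa: "(s+t) * a = s" "(s+t) * (1-a) = t" using \<open>s>0\<close> \<open>t>0\<close> by (simp_all add: a_def field_simps)
    have e1: "(s+t) * (a * r + (1-a) * r') = s * r + t * r'"
      by (metis sa distrib_left mult.assoc)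
    have e2: "(s+t) * (a * Q (m + t *\<^sub>R y) + (1-a) * Q (m' - s *\<^sub>R y)) = s * Q (m + t *\<^sub>R y) + t * Q (m' - s *\<^sub>R y)"
      by (metis sa distrib_left mult.assoc)
    have "s * r + t * r' \<le> s * Q (m + t *\<^sub>R y) + t * Q (m' - s *\<^sub>R y)"
      using mult_left_mono[OF fin, of "s+t"] 1 2 e1 e2 by simp
    then have h: "t * (r' - Q (m' - s *\<^sub>R y)) \<le> s * (Q (m + t *\<^sub>R y) - r)" by (simp add: algebra_simps)
    have "(r' - Q (m' - s *\<^sub>R y)) / s \<le> (Q (m + t *\<^sub>R y) - r) / t"
      using h 1(3) 2(3) by (simp add: divide_le_eq le_divide_eq mult.commute)
    then show ?thesis using 1 2 by simp
  qed
  have U0: "(Q (0 + 1 *\<^sub>R y) - 0) / 1 \<in> U" unfolding U_def using goodg_0[OF G] zero_less_one by blast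
  have L0: "(0 - Q (0 - 1 *\<^sub>R y)) / 1 \<in> L" unfolding L_def using goodg_0[OF G] zero_less_one by blast
  define c where "c = Sup L"
  have bdd: "bdd_above L" using key U0 by (meson bdd_above.I)
  have Lc: "l \<le> c" if "l \<in> L" for l using bdd that cSup_upper c_def by blast
  have Uc: "c \<le> u" if "u \<in> U" for u unfolding c_def by (rule cSup_least) (use L0 key that in auto)
  define G' where "G' = {(m + t *\<^sub>R y, r + t * c) | m r t. (m,r)\<in>G}"
  have sub: "G \<subseteq> G'"
  proof
    fix p assume "p \<in> G"
    then show "p \<in> G'" unfolding G'_def by (cases p) force
  qed
  have yc: "(y, c) \<in> G'" unfolding G'_def using goodg_0[OF G] by force
  have "goodg Q G'"
    unfolding goodg_def
  proof (intro conjI allI impI)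
    show "(0,0) \<in> G'" using sub goodg_0[OF G] by blast
  next
    fix v r w s a b assume "(v,r)\<in>G'" "(w,s)\<in>G'"
    then obtain m1 r1 t1 m2 r2 t2 where h: "v = m1 + t1 *\<^sub>R y" "r = r1 + t1 * c" "(m1,r1)\<in>G"
       "w = m2 + t2 *\<^sub>R y" "s = r2 + t2 * c" "(m2,r2)\<in>G" unfolding G'_def by blast
    have "(a *\<^sub>R m1 + b *\<^sub>R m2, a * r1 + b * r2) \<in> G" using goodg_comb[OF G] h by blast
    moreover have "a *\<^sub>R v + b *\<^sub>R w = (a *\<^sub>R m1 + b *\<^sub>R m2) + (a * t1 + b * t2) *\<^sub>R y"
      using h by (simp add: algebra_simps)
    moreover have "a * r + b * s = (a * r1 + b * r2) + (a * t1 + b * t2) * c" using h by (simp add: algebra_simps)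
    ultimately show "(a *\<^sub>R v + b *\<^sub>R w, a * r + b * s) \<in> G'" unfolding G'_def by blast
  next
    fix v r assume "(v,r)\<in>G'"
    then obtain m r1 t where h: "v = m + t *\<^sub>R y" "r = r1 + t * c" "(m,r1)\<in>G" unfolding G'_def by blast
    show "r \<le> Q v"
    proof (cases "t > 0")
      case True
      have "c \<le> (Q (m + t *\<^sub>R y) - r1) / t" using Uc h True unfolding U_def by blast
      then show ?thesis using h True by (simp add: field_simps)
    next
      case False
      show ?thesis
      proof (cases "t = 0")
        case True then show ?thesis using h goodg_le[OF G] by auto
      next
        case F2: False
        then have s: "-t > 0" using False by simp
        have "(r1 - Q (m - (-t) *\<^sub>R y)) / (-t) \<le> c" using Lc h s unfolding L_def by blast
        then show ?thesis using h s by (simp add: field_simps)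
      qed
    qed
  qed
  moreover have "G' \<noteq> G" using yc y by blast
  ultimately show ?thesis using sub by blast
qed

lemma hb_convex:
  fixes Q :: "'a::real_vector \<Rightarrow> real"
  assumes cvx: "\<And>u v a. 0 \<le> a \<Longrightarrow> a \<le> 1 \<Longrightarrow> Q (a *\<^sub>R u + (1-a) *\<^sub>R v) \<le> a * Q u + (1-a) * Q v"
    and Q0: "Q 0 = 0"
  shows "\<exists>f. linear f \<and> (\<forall>v. f v \<le> Q v)"
proof -
  let ?A = "{G. goodg Q G}"
  have "\<forall>C\<in>chains ?A. \<exists>U\<in>?A. \<forall>X\<in>C. X \<subseteq> U"
  proof
    fix C assume C: "C \<in> chains ?A"
    show "\<exists>U\<in>?A. \<forall>X\<in>C. X \<subseteq> U"
    proof (cases "C = {}")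
      case True
      have "goodg Q {(0,0)}" unfolding goodg_def using Q0 by auto
      then show ?thesis using True by blast
    next
      case False
      have ch: "\<forall>X\<in>C. \<forall>Y\<in>C. X \<subseteq> Y \<or> Y \<subseteq> X" and CA: "C \<subseteq> ?A"
        using C unfolding chains_def chain_subset_def by auto
      have "goodg Q (\<Union>C)" unfolding goodg_def
      proof (intro conjI allI impI)
        show "(0,0) \<in> \<Union>C" using False CA goodg_0 by blast
      next
        fix v r w s a b assume "(v,r) \<in> \<Union>C" "(w,s) \<in> \<Union>C"
        then obtain X Y where "X\<in>C" "Y\<in>C" "(v,r)\<in>X" "(w,s)\<in>Y" by blast
        then show "(a *\<^sub>R v + b *\<^sub>R w, a * r + b * s) \<in> \<Union>C" 
        proof -
          have "X \<subseteq> Y \<or> Y \<subseteq> X" using ch \<open>X\<in>C\<close> \<open>Y\<in>C\<close> by blast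
          then show ?thesis
          proof
            assume "X \<subseteq> Y"
            then have "(a *\<^sub>R v + b *\<^sub>R w, a * r + b * s) \<in> Y"
              using goodg_comb[of Q Y] CA \<open>Y\<in>C\<close> \<open>(v,r)\<in>X\<close> \<open>(w,s)\<in>Y\<close> by blast
            then show ?thesis using \<open>Y\<in>C\<close> by blast
          next
            assume "Y \<subseteq> X"
            then have "(a *\<^sub>R v + b *\<^sub>R w, a * r + b * s) \<in> X"
              using goodg_comb[of Q X] CA \<open>X\<in>C\<close> \<open>(v,r)\<in>X\<close> \<open>(w,s)\<in>Y\<close> by blast
            then show ?thesis using \<open>X\<in>C\<close> by blast
          qed
        qed
      next
        fix v r assume "(v,r) \<in> \<Union>C"
        then show "r \<le> Q v" using CA goodg_le by blast
      qed
      then show ?thesis by blast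
    qed
  qed
  from Zorn_Lemma2[OF this] obtain M where M0: "M \<in> ?A" "\<forall>X\<in>?A. M \<subseteq> X \<longrightarrow> X = M" by blast
  have M: "goodg Q M" "\<forall>X. goodg Q X \<longrightarrow> M \<subseteq> X \<longrightarrow> X = M" using M0 by auto
  have dom: "\<exists>r. (v,r)\<in>M" for v
  proof (rule ccontr)
    assume "\<not> ?thesis"
    then show False using goodg_extend[OF cvx Q0 M(1), of v] M(2) by blast
  qed
  define f where "f v = (THE r. (v,r)\<in>M)" for v
  have fM: "(v, f v) \<in> M" for v
  proof -
    obtain r where r: "(v,r)\<in>M" using dom by blast
    have "\<exists>!r. (v,r)\<in>M" using r goodg_fun[OF M(1) Q0, of v] by blast
    then show ?thesis unfolding f_def by (rule theI')
  qed
  have feq: "f v = r" if "(v,r)\<in>M" for v r using goodg_fun[OF M(1) Q0 that fM] by simp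
  have lin: "linear f"
  proof (rule linearI)
    fix u v
    have "(1 *\<^sub>R u + 1 *\<^sub>R v, 1 * f u + 1 * f v) \<in> M" using goodg_comb[OF M(1) fM fM] by blast
    then show "f (u + v) = f u + f v" using feq by simp
  next
    fix a u
    have "(a *\<^sub>R u + 0 *\<^sub>R u, a * f u + 0 * f u) \<in> M" using goodg_comb[OF M(1) fM fM] by blast
    then show "f (a *\<^sub>R u) = a *\<^sub>R f u" using feq by simp
  qed
  have "f v \<le> Q v" for v using fM goodg_le[OF M(1)] by blast
  then show ?thesis using lin by blast
qed


lemma infdist_lt_ex:
  assumes "K \<noteq> {}" "infdist x K < d" shows "\<exists>k\<in>K. dist x k < d"
proof -
  have "(INF k\<in>K. dist x k) < d" using assms infdist_notempty by metis
  then show ?thesis using assms(1) cINF_less_iff[of K "\<lambda>k. dist x k" d] by (auto intro: bdd_belowI2[of _ 0])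
qed

lemma infdist_convex:
  fixes K :: "'a::real_normed_vector set"
  assumes "convex K" "K \<noteq> {}" "0 \<le> a" "a \<le> 1"
  shows "infdist (a *\<^sub>R u + (1-a) *\<^sub>R w) K \<le> a * infdist u K + (1-a) * infdist w K"
proof (rule field_le_epsilon)
  fix e :: real assume e: "0 < e"
  obtain k1 where k1: "k1\<in>K" "dist u k1 < infdist u K + e" using infdist_lt_ex[OF assms(2)] e by force
  obtain k2 where k2: "k2\<in>K" "dist w k2 < infdist w K + e" using infdist_lt_ex[OF assms(2)] e by force
  have kin: "a *\<^sub>R k1 + (1-a) *\<^sub>R k2 \<in> K" using assms k1 k2 unfolding convex_def by auto
  have "infdist (a *\<^sub>R u + (1-a) *\<^sub>R w) K \<le> dist (a *\<^sub>R u + (1-a) *\<^sub>R w) (a *\<^sub>R k1 + (1-a) *\<^sub>R k2)"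
    using infdist_le[OF kin] .
  also have "\<dots> = norm (a *\<^sub>R (u - k1) + (1-a) *\<^sub>R (w - k2))" by (simp add: dist_norm algebra_simps)
  also have "\<dots> \<le> a * dist u k1 + (1-a) * dist w k2"
    using norm_triangle_ineq[of "a *\<^sub>R (u - k1)" "(1-a) *\<^sub>R (w - k2)"] assms by (simp add: dist_norm)
  also have "\<dots> \<le> a * (infdist u K + e) + (1-a) * (infdist w K + e)"
    using k1 k2 assms by (intro add_mono mult_left_mono) auto
  also have "\<dots> = a * infdist u K + (1-a) * infdist w K + e" by (simp add: algebra_simps)
  finally show "infdist (a *\<^sub>R u + (1-a) *\<^sub>R w) K \<le> a * infdist u K + (1-a) * infdist w K + e" .
qed

lemma separation:
  fixes K :: "'a::real_normed_vector set"
  assumes "closed K" "convex K" "K \<noteq> {}" "x \<notin> K"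
  shows "\<exists>f. bounded_linear f \<and> (\<forall>y\<in>K. f y + infdist x K \<le> f x) \<and> infdist x K > 0"
proof -
  define Q where "Q v = infdist (x + v) K - infdist x K" for v
  have cvx: "Q (a *\<^sub>R u + (1-a) *\<^sub>R v) \<le> a * Q u + (1-a) * Q v" if "0 \<le> a" "a \<le> 1" for u v a
  proof -
    have "x + (a *\<^sub>R u + (1-a) *\<^sub>R v) = a *\<^sub>R (x + u) + (1-a) *\<^sub>R (x + v)" by (simp add: algebra_simps)
    then show ?thesis using infdist_convex[OF assms(2,3) that, of "x+u" "x+v"] unfolding Q_def
      by (simp add: algebra_simps)
  qed
  have Q0: "Q 0 = 0" unfolding Q_def by simp
  obtain f where f: "linear f" "\<forall>v. f v \<le> Q v" using hb_convex[OF cvx Q0] by blast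
  have Qn: "Q v \<le> norm v" for v using infdist_triangle[of "x+v" K x] unfolding Q_def by (simp add: dist_norm)
  have bl: "bounded_linear f"
  proof (rule bounded_linear_intro[where K=1])
    fix u v show "f (u + v) = f u + f v" using f(1) by (simp add: linear_add)
  next
    fix r u show "f (r *\<^sub>R u) = r *\<^sub>R f u" using f(1) by (simp add: linear_scale)
  next
    fix u
    have "f u \<le> norm u" using f(2) Qn order_trans by blast
    moreover have "f (-u) \<le> norm u" using f(2) Qn[of "-u"] order_trans by fastforce
    moreover have "f (-u) = - f u" using f(1) by (simp add: linear_neg)
    ultimately show "norm (f u) \<le> norm u * 1" by auto
  qed
  have pos: "infdist x K > 0" using assms by (simp add: infdist_pos_not_in_closed)
  have "f y + infdist x K \<le> f x" if "y \<in> K" for y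
  proof -
    have "f (y - x) \<le> Q (y - x)" using f(2) by blast
    also have "\<dots> = - infdist x K" unfolding Q_def using that by simp
    finally show ?thesis using f(1) by (simp add: linear_diff)
  qed
  then show ?thesis using bl pos by blast
qed

lemma weak_cluster:
  fixes xs :: "nat \<Rightarrow> 'a::real_normed_vector"
  assumes refl: "\<forall>\<phi> :: ('a \<Rightarrow>\<^sub>L real) \<Rightarrow>\<^sub>L real. \<exists>x::'a. \<forall>f. blinfun_apply \<phi> f = blinfun_apply f x"
    and bd: "\<And>n. norm (xs n) \<le> B"
  shows "\<exists>z. \<forall>(f::'a \<Rightarrow>\<^sub>L real) c. eventually (\<lambda>n. blinfun_apply f (xs n) \<le> c) sequentially \<longrightarrow> blinfun_apply f z \<le> c"
proof -
  define Lf where "Lf f = limsup (\<lambda>n. ereal (blinfun_apply f (xs n)))" for f :: "'a \<Rightarrow>\<^sub>L real"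
  define P where "P f = real_of_ereal (Lf f)" for f
  have B0: "0 \<le> B" using bd[of 0] norm_ge_zero order_trans by blast
  have fb: "\<bar>blinfun_apply f (xs n)\<bar> \<le> norm f * B" for f n
    using norm_blinfun[of f "xs n"] mult_left_mono[OF bd[of n], of "norm f"] by simp
  have Lfin: "Lf f = ereal (P f)" for f
  proof -
    have u: "\<forall>n. blinfun_apply f (xs n) \<le> norm f * B" using fb abs_le_D1 by blast
    have l: "\<forall>n. - (norm f * B) \<le> blinfun_apply f (xs n)" using fb by (smt (verit))
    have "Lf f \<le> ereal (norm f * B)" unfolding Lf_def
      by (rule Limsup_bounded) (use u in \<open>auto intro: always_eventually\<close>)
    moreover have "ereal (- (norm f * B)) \<le> Lf f" unfolding Lf_def
      by (rule le_Limsup) (use l in \<open>auto intro: always_eventually\<close>)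
    ultimately show ?thesis unfolding P_def by (cases "Lf f") auto
  qed
  have Pev: "P f \<le> c" if "eventually (\<lambda>n. blinfun_apply f (xs n) \<le> c) sequentially" for f c
  proof -
    have "Lf f \<le> ereal c" unfolding Lf_def by (rule Limsup_bounded) (use that in auto)
    then show ?thesis using Lfin by simp
  qed
  have Pb: "P f \<le> norm f * B" for f
  proof -
    have "\<forall>n. blinfun_apply f (xs n) \<le> norm f * B" using fb abs_le_D1 by blast
    then show ?thesis by (intro Pev always_eventually)
  qed
  have Padd: "P (f + g) \<le> P f + P g" for f g
  proof -
    have "Lf (f + g) = limsup (\<lambda>n. ereal (blinfun_apply f (xs n)) + ereal (blinfun_apply g (xs n)))"
      unfolding Lf_def by (simp add: blinfun.add_left)
    also have "\<dots> \<le> Lf f + Lf g" unfolding Lf_def by (rule ereal_limsup_add_mono)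
    finally show ?thesis using Lfin by (metis ereal_less_eq(3) plus_ereal.simps(1))
  qed
  have Pmul: "P (c *\<^sub>R f) = c * P f" if "0 \<le> c" for c f
  proof -
    have "Lf (c *\<^sub>R f) = limsup (\<lambda>n. ereal c * ereal (blinfun_apply f (xs n)))"
      unfolding Lf_def by (simp add: blinfun.scaleR_left)
    also have "\<dots> = ereal c * Lf f" unfolding Lf_def by (rule Limsup_ereal_mult_left) (use that in auto)
    finally show ?thesis using Lfin by (metis real_of_ereal.simps(1) times_ereal.simps(1))
  qed
  have cvx: "P (a *\<^sub>R u + (1-a) *\<^sub>R v) \<le> a * P u + (1-a) * P v" if "0 \<le> a" "a \<le> 1" for u v a
    using Padd[of "a *\<^sub>R u" "(1-a) *\<^sub>R v"] Pmul[of a u] Pmul[of "1-a" v] that by simp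
  have P0: "P 0 = 0"
  proof -
    have "Lf 0 = 0" unfolding Lf_def by (simp add: Limsup_const zero_ereal_def)
    then show ?thesis unfolding P_def by simp
  qed
  obtain \<phi> where phi: "linear \<phi>" "\<forall>f. \<phi> f \<le> P f" using hb_convex[OF cvx P0] by blast
  have blp: "bounded_linear \<phi>"
  proof (rule bounded_linear_intro[where K=B])
    fix u v show "\<phi> (u + v) = \<phi> u + \<phi> v" using phi(1) by (simp add: linear_add)
  next
    fix r u show "\<phi> (r *\<^sub>R u) = r *\<^sub>R \<phi> u" using phi(1) by (simp add: linear_scale)
  next
    fix u
    have "\<phi> u \<le> norm u * B" using phi(2) Pb order_trans by blast
    moreover have "\<phi> (-u) \<le> norm u * B" using phi(2) Pb[of "-u"] order_trans by fastforce
    moreover have "\<phi> (-u) = - \<phi> u" using phi(1) by (simp add: linear_neg)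
    ultimately show "norm (\<phi> u) \<le> norm u * B" by auto
  qed
  obtain z where z: "\<forall>f. blinfun_apply (Blinfun \<phi>) f = blinfun_apply f z" using refl by blast
  have "blinfun_apply f z = \<phi> f" for f using z bounded_linear_Blinfun_apply[OF blp] by metis
  then show ?thesis using phi(2) Pev by (metis order_trans)
qed


lemma nearest_exists:
  fixes K :: "'a::banach set"
  assumes refl: "reflexive_space TYPE('a)" and K: "closed K" "convex K" "K \<noteq> {}"
  shows "\<exists>z\<in>K. norm (a - z) = infdist a K"
proof -
  define d where "d = infdist a K"
  have "\<forall>n. \<exists>k\<in>K. dist a k < d + 1 / real (Suc n)"
  proof
    fix n
    have "infdist a K < d + 1 / real (Suc n)" unfolding d_def by simp
    then show "\<exists>k\<in>K. dist a k < d + 1 / real (Suc n)" by (rule infdist_lt_ex[OF K(3)])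
  qed
  then obtain xs where xs: "\<And>n. xs n \<in> K" "\<And>n. dist a (xs n) < d + 1 / real (Suc n)" by metis
  have bd: "norm (xs n) \<le> norm a + d + 1" for n
  proof -
    have "1 / real (Suc n) \<le> 1" by simp
    moreover have "norm (xs n) \<le> norm a + dist a (xs n)"
      using norm_triangle_ineq[of a "xs n - a"] by (simp add: dist_norm norm_minus_commute)
    ultimately show ?thesis using xs(2)[of n] by linarith
  qed
  obtain z where z: "\<And>(f::'a \<Rightarrow>\<^sub>L real) c. eventually (\<lambda>n. blinfun_apply f (xs n) \<le> c) sequentially \<Longrightarrow> blinfun_apply f z \<le> c"
  proof -
    have "\<exists>z. \<forall>(f::'a \<Rightarrow>\<^sub>L real) c. eventually (\<lambda>n. blinfun_apply f (xs n) \<le> c) sequentially \<longrightarrow> blinfun_apply f z \<le> c"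
      by (rule weak_cluster) (use refl bd in \<open>auto simp: reflexive_space_def\<close>)
    then show ?thesis using that by blast
  qed
  have inK: "z \<in> K \<inter> cball a r" if r: "r > d" for r
  proof (rule ccontr)
    assume nz: "z \<notin> K \<inter> cball a r"
    obtain N where N: "inverse (real (Suc N)) < r - d" using reals_Archimedean[of "r - d"] r by auto
    have ev: "eventually (\<lambda>n. xs n \<in> K \<inter> cball a r) sequentially"
      unfolding eventually_sequentially
    proof (intro exI allI impI)
      fix n assume "N \<le> n"
      then have "1 / real (Suc n) \<le> 1 / real (Suc N)" by (simp add: frac_le)
      then have "dist a (xs n) \<le> r" using xs(2)[of n] N by (simp add: inverse_eq_divide)
      then show "xs n \<in> K \<inter> cball a r" using xs(1) by simp
    qed
    then have ne: "K \<inter> cball a r \<noteq> {}" using eventually_happens'[OF sequentially_bot] by blast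
    obtain f where f: "bounded_linear f" "\<forall>y\<in>K \<inter> cball a r. f y + infdist z (K \<inter> cball a r) \<le> f z"
      "infdist z (K \<inter> cball a r) > 0"
      using separation[of "K \<inter> cball a r" z, OF closed_Int[OF K(1) closed_cball] convex_Int[OF K(2) convex_cball] ne nz] by blast
    define \<delta> where "\<delta> = infdist z (K \<inter> cball a r)"
    have "eventually (\<lambda>n. blinfun_apply (Blinfun f) (xs n) \<le> f z - \<delta>) sequentially"
      unfolding bounded_linear_Blinfun_apply[OF f(1)]
    proof (rule eventually_mono[OF ev])
      fix n assume xn: "xs n \<in> K \<inter> cball a r"
      show "f (xs n) \<le> f z - \<delta>" using f(2)[rule_format, OF xn] unfolding \<delta>_def by linarith
    qed
    then have "blinfun_apply (Blinfun f) z \<le> f z - \<delta>" by (rule z)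
    then show False using f(3) unfolding \<delta>_def bounded_linear_Blinfun_apply[OF f(1)] by simp
  qed
  have zK: "z \<in> K" using inK[of "d+1"] by simp
  have "dist a z \<le> d"
  proof (rule field_le_epsilon)
    fix e :: real assume "0 < e" then show "dist a z \<le> d + e" using inK[of "d+e"] by simp
  qed
  moreover have "d \<le> dist a z" unfolding d_def using zK by (rule infdist_le)
  ultimately show ?thesis using zK unfolding d_def by (auto simp: dist_norm)
qed

lemma nearest_unique:
  fixes K :: "'a::real_normed_vector set"
  assumes sc: "strictly_convex_space TYPE('a)" and K: "convex K"
    and z1: "z1 \<in> K" "norm (a - z1) = infdist a K" and z2: "z2 \<in> K" "norm (a - z2) = infdist a K"
  shows "z1 = z2"
proof (rule ccontr)
  assume ne: "z1 \<noteq> z2"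
  define d where "d = infdist a K"
  have "d \<noteq> 0"
  proof
    assume "d = 0" then have "z1 = a" "z2 = a" using z1 z2 unfolding d_def by auto
    then show False using ne by simp
  qed
  then have dp: "d > 0" using infdist_nonneg[of a K] unfolding d_def by linarith
  define u where "u = (1/d) *\<^sub>R (a - z1)"
  define w where "w = (1/d) *\<^sub>R (a - z2)"
  have nu: "norm u = 1" "norm w = 1" using z1 z2 dp unfolding u_def w_def d_def by auto
  have "u \<noteq> w" using ne dp unfolding u_def w_def by auto
  then have lt: "norm ((1/2) *\<^sub>R (u + w)) < 1" using sc nu unfolding strictly_convex_space_def by blast
  define m where "m = (1/2) *\<^sub>R z1 + (1 - 1/2) *\<^sub>R z2"
  have mK: "m \<in> K" using K z1 z2 unfolding m_def by (intro convexD[OF K z1(1) z2(1)]) auto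
  have "(1/2) *\<^sub>R (u + w) = (1/d) *\<^sub>R (a - m)" 
  proof -
    have e1: "(a - z1) + (a - z2) = 2 *\<^sub>R (a - m)" unfolding m_def
      by (simp add: scaleR_right_diff_distrib scaleR_right_distrib scaleR_2)
    have "(1/2) *\<^sub>R (u + w) = (1/2) *\<^sub>R ((1/d) *\<^sub>R ((a - z1) + (a - z2)))"
      unfolding u_def w_def by (simp add: scaleR_right_distrib)
    also have "\<dots> = (1/d) *\<^sub>R (a - m)" unfolding e1 by simp
    finally show ?thesis .
  qed
  then have "norm (a - m) < d" using lt dp by simp
  moreover have "d \<le> norm (a - m)" unfolding d_def using infdist_le[OF mK, of a] by (simp add: dist_norm)
  ultimately show False by simp
qed

theorem proposition3p4:
  fixes C :: "'a::banach set" and T :: "'s::semigroup_mult \<Rightarrow> 'a \<Rightarrow> 'a"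
  assumes "reflexive_space TYPE('a)"
    and "strictly_convex_space TYPE('a)"
    and "closed C" and "convex C"
    and "semigroup_representation T C"
    and "nonexpansive_rep T C"
  shows "(\<exists>C0. C0 \<subseteq> C \<and> C0 \<noteq> {} \<and> closed C0 \<and> convex C0 \<and> S_invariant T C0
              \<and> attractive_points T C0 \<noteq> {})
         \<longleftrightarrow> (\<exists>x\<in>C. \<forall>s. T s x = x)"
proof
  assume "\<exists>C0. C0 \<subseteq> C \<and> C0 \<noteq> {} \<and> closed C0 \<and> convex C0 \<and> S_invariant T C0
              \<and> attractive_points T C0 \<noteq> {}"
  then obtain C0 a where C0: "C0 \<subseteq> C" "C0 \<noteq> {}" "closed C0" "convex C0" "S_invariant T C0"
    and a: "a \<in> attractive_points T C0" by blast
  obtain z where z: "z \<in> C0" "norm (a - z) = infdist a C0"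
    using nearest_exists[OF assms(1) C0(3,4,2)] by blast
  have "T s z = z" for s
  proof -
    have Tz: "T s z \<in> C0" using C0(5) z(1) unfolding S_invariant_def by blast
    have "norm (a - T s z) \<le> norm (a - z)" using a z(1) unfolding attractive_points_def by blast
    moreover have "infdist a C0 \<le> norm (a - T s z)" using infdist_le[OF Tz, of a] by (simp add: dist_norm)
    ultimately have "norm (a - T s z) = infdist a C0" using z(2) by simp
    then show ?thesis using nearest_unique[OF assms(2) C0(4) Tz _ z] by blast
  qed
  then show "\<exists>x\<in>C. \<forall>s. T s x = x" using z(1) C0(1) by blast
next
  assume "\<exists>x\<in>C. \<forall>s. T s x = x"
  then obtain x where x: "x \<in> C" "\<forall>s. T s x = x" by blast
  have "x \<in> attractive_points T {x}" unfolding attractive_points_def using x by simp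
  moreover have "S_invariant T {x}" unfolding S_invariant_def using x by simp
  ultimately show "\<exists>C0. C0 \<subseteq> C \<and> C0 \<noteq> {} \<and> closed C0 \<and> convex C0 \<and> S_invariant T C0
              \<and> attractive_points T C0 \<noteq> {}"
    using x by (intro exI[of _ "{x}"]) auto
qed

end
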